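(* Let $\alpha > 0$ and let $\mathcal{X} \subset \mathbb{R}^2$ be a finite set with no $\alpha$-isolated points. Then the vertices of the $\alpha$-shape of $\mathcal{X}$ and the vertices of the $\alpha$-convex hull of $\mathcal{X}$ coincide.
   Context: A point $x\in\mathcal{X}$ is $\alpha$-isolated if there is no other point of $\mathcal{X}$ within distance $2\alpha$ of $x$. A pair of distinct points $x,x'\in\mathcal{X}$ forms an $\alpha$-edge if there is an open ball $B$ of radius $\alpha$ with $x,x'\in\partial B$ and $B\cap\mathcal{X}=\emptyset$; the $\alpha$-shape of $\mathcal{X}$ is the union of the segments $[xx']$ over all $\alpha$-edges, and its vertices are the points of $\mathcal{X}$ that are endpoints of some $\alpha$-edge. The $\alpha$-convex hull $H$ of $\mathcal{X}$ is the smallest $\alpha$-convex set containing $\mathcal{X}$ (a set $T$ is $\alpha$-convex if for every $x\notin\bar T$ there is an open ball of radius $\alpha$ containing $x$ and disjoint from $\bar T$); equivalently $H=\bigcap_{B}(\mathbb{R}^2\setminus B)$ over all open balls $B$ of radius $\alpha$ with $B\cap\mathcal{X}=\emptyset$. Its vertices are the points of $\mathcal{X}$ lying on $\partial H$. *)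

theory Defs
  imports "HOL-Analysis.Analysis"
begin

definition alpha_isolated :: "real \<Rightarrow> (real^2) set \<Rightarrow> real^2 \<Rightarrow> bool" where
  "alpha_isolated \<alpha> X x \<longleftrightarrow> x \<in> X \<and> (\<forall>y\<in>X. y \<noteq> x \<longrightarrow> dist x y > 2 * \<alpha>)"

definition alpha_edge :: "real \<Rightarrow> (real^2) set \<Rightarrow> real^2 \<Rightarrow> real^2 \<Rightarrow> bool" where
  "alpha_edge \<alpha> X x x' \<longleftrightarrow> x \<in> X \<and> x' \<in> X \<and> x \<noteq> x' \<and>
     (\<exists>c. x \<in> sphere c \<alpha> \<and> x' \<in> sphere c \<alpha> \<and> ball c \<alpha> \<inter> X = {})"

definition alpha_shape :: "real \<Rightarrow> (real^2) set \<Rightarrow> (real^2) set" where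
  "alpha_shape \<alpha> X = (\<Union>{closed_segment x x' | x x'. alpha_edge \<alpha> X x x'})"

definition alpha_shape_vertices :: "real \<Rightarrow> (real^2) set \<Rightarrow> (real^2) set" where
  "alpha_shape_vertices \<alpha> X = {x \<in> X. \<exists>x'. alpha_edge \<alpha> X x x'}"

definition alpha_convex_hull :: "real \<Rightarrow> (real^2) set \<Rightarrow> (real^2) set" where
  "alpha_convex_hull \<alpha> X = \<Inter>{- ball c \<alpha> | c. ball c \<alpha> \<inter> X = {}}"

definition alpha_hull_vertices :: "real \<Rightarrow> (real^2) set \<Rightarrow> (real^2) set" where
  "alpha_hull_vertices \<alpha> X = {x \<in> X. x \<in> frontier (alpha_convex_hull \<alpha> X)}"

end

theory Submission
  imports Defs
begin

lemma hull_closed: "closed (alpha_convex_hull a X)"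
  unfolding alpha_convex_hull_def by (rule closed_Inter) auto

lemma hull_sup: "X \<subseteq> alpha_convex_hull a X"
  unfolding alpha_convex_hull_def by auto

lemma ball_out: "ball c a \<inter> X = {} \<Longrightarrow> ball c a \<subseteq> - alpha_convex_hull a X"
  unfolding alpha_convex_hull_def by auto

lemma lemA:
  assumes "a > 0" "x \<in> X" "dist c x = a" "ball c a \<inter> X = {}"
  shows "x \<in> frontier (alpha_convex_hull a X)"
proof -
  have "x \<in> closure (alpha_convex_hull a X)"
    using hull_sup assms(2) closure_subset by blast
  moreover have "x \<in> closure (ball c a)" using assms by (simp add: closure_ball)
  then have "x \<in> closure (- alpha_convex_hull a X)"
    using closure_mono[OF ball_out[OF assms(4)]] by blast
  ultimately show ?thesis by (simp add: frontier_def interior_closure)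
qed

lemma lemB:
  assumes "a > 0" "x \<in> X" "x \<in> frontier (alpha_convex_hull a X)"
  shows "\<exists>c. dist x c = a \<and> (\<forall>y\<in>X. a \<le> dist c y)"
proof -
  let ?H = "alpha_convex_hull a X"
  define C where "C = (\<Inter>y\<in>X. - ball y a)"
  have Cc: "c \<in> C \<longleftrightarrow> (\<forall>y\<in>X. a \<le> dist c y)" for c
    by (auto simp: C_def dist_commute)
  have notint: "x \<notin> interior ?H" using assms(3) by (simp add: frontier_def)
  have key: "\<exists>c\<in>C. dist x c < a + e" if "e > 0" for e
  proof -
    from notint that obtain z where z: "z \<in> ball x e" "z \<notin> ?H"
      unfolding mem_interior by blast
    then obtain c where c: "ball c a \<inter> X = {}" "z \<in> ball c a"
      unfolding alpha_convex_hull_def by auto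
    have "\<forall>y\<in>X. a \<le> dist c y"
    proof
      fix y assume "y \<in> X"
      then have "y \<notin> ball c a" using c(1) by blast
      then show "a \<le> dist c y" by simp
    qed
    then have "c \<in> C" using Cc by blast
    moreover have "dist x c < a + e" using z(1) c(2) dist_triangle[of x c z]
      by (simp add: dist_commute)
    ultimately show ?thesis by blast
  qed
  have "closed C" unfolding C_def by (rule closed_INT) auto
  moreover have "C \<noteq> {}" using key[of 1] by auto
  ultimately obtain c where c: "c \<in> C" "\<And>d. d \<in> C \<Longrightarrow> dist x c \<le> dist x d"
    using distance_attains_inf by blast
  have ge: "a \<le> dist x c" using c(1) assms(2) Cc by (auto simp: dist_commute)
  have "dist x c \<le> a"
  proof (rule ccontr)
    assume "\<not> dist x c \<le> a"
    then obtain d where "d \<in> C" "dist x d < a + (dist x c - a)" using key[of "dist x c - a"] by auto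
    with c(2)[of d] show False by auto
  qed
  with ge c(1) Cc show ?thesis by auto
qed

lemma lemC:
  fixes X :: "(real^2) set"
  assumes "a > 0" "finite X" "x \<in> X" "y0 \<in> X" "y0 \<noteq> x" "dist x y0 \<le> 2 * a"
    and "dist x c0 = a" "\<forall>y\<in>X. a \<le> dist c0 y"
  shows "\<exists>x'. alpha_edge a X x x'"
proof (rule ccontr)
  assume noedge: "\<not> (\<exists>x'. alpha_edge a X x x')"
  define C where "C = (\<Inter>y\<in>X. - ball y a)"
  have Cc: "c \<in> C \<longleftrightarrow> (\<forall>y\<in>X. a \<le> dist c y)" for c
    by (auto simp: C_def dist_commute)
  have strict: "a < dist c y" if "dist x c = a" "c \<in> C" "y \<in> X" "y \<noteq> x" for c y
  proof (rule ccontr)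
    assume "\<not> a < dist c y"
    then have "dist c y = a" using that Cc by force
    moreover have "ball c a \<inter> X = {}" using that(2) Cc by (force simp: mem_ball)
    ultimately have "alpha_edge a X x y"
      unfolding alpha_edge_def using that assms(3) by (auto simp: dist_commute)
    then show False using noedge by blast
  qed
  define S where "S = sphere x a \<inter> C"
  have "closed C" unfolding C_def by (rule closed_INT) auto
  then have cl: "closedin (top_of_set (sphere x a)) S" unfolding S_def by (rule closedin_closed_Int)
  have op: "openin (top_of_set (sphere x a)) S"
    unfolding openin_euclidean_subtopology_iff
  proof (intro conjI ballI)
    show "S \<subseteq> sphere x a" by (auto simp: S_def)
  next
    fix c assume cS: "c \<in> S"
    define U where "U = (\<Inter>y\<in>X-{x}. - cball y a)"
    have "open U" unfolding U_def using assms(2) by (intro open_INT) auto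
    moreover have "c \<in> U"
    proof -
      have "dist x c = a" "c \<in> C" using cS by (auto simp: S_def)
      then have "\<forall>y\<in>X-{x}. a < dist c y" using strict by blast
      then show ?thesis unfolding U_def by (force simp: dist_commute)
    qed
    ultimately obtain e where e: "e > 0" "ball c e \<subseteq> U" using open_contains_ball by blast
    show "\<exists>e>0. \<forall>x'\<in>sphere x a. dist x' c < e \<longrightarrow> x' \<in> S"
    proof (intro exI[of _ e] conjI ballI impI)
      fix x' assume x': "x' \<in> sphere x a" "dist x' c < e"
      then have "x' \<in> U" using e by (auto simp: dist_commute)
      then have u: "\<forall>y\<in>X-{x}. a < dist y x'" unfolding U_def by (simp add: not_le)
      have "\<forall>y\<in>X. a \<le> dist x' y"
      proof
        fix y assume "y \<in> X"
        show "a \<le> dist x' y"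
        proof (cases "y = x")
          case True then show ?thesis using x'(1) by (simp add: dist_commute)
        next
          case False then show ?thesis using u \<open>y \<in> X\<close> by (force simp: dist_commute)
        qed
      qed
      then show "x' \<in> S" using x'(1) Cc by (auto simp: S_def)
    qed (fact e(1))
  qed
  have "connected (sphere x a)" by (rule connected_sphere) simp
  then have "S = {} \<or> S = sphere x a" using op cl unfolding connected_clopen by blast
  moreover have "c0 \<in> S" using assms(7,8) Cc by (auto simp: S_def)
  ultimately have Sall: "S = sphere x a" by blast
  define n where "n = norm (y0 - x)"
  have n: "n > 0" "n \<le> 2 * a" using assms(5,6) by (auto simp: n_def dist_norm norm_minus_commute)
  define c where "c = x + (a / n) *\<^sub>R (y0 - x)"
  have "dist x c = a" using n \<open>a > 0\<close> by (simp add: c_def dist_norm n_def)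
  then have "c \<in> S" using Sall by simp
  then have lt: "a < dist c y0" using strict[of c y0] \<open>dist x c = a\<close> assms(4,5) by (auto simp: S_def)
  have "c - y0 = (a / n - 1) *\<^sub>R (y0 - x)" by (simp add: c_def algebra_simps)
  then have "dist c y0 = \<bar>a / n - 1\<bar> * n" by (simp add: dist_norm n_def)
  also have "\<dots> = \<bar>a - n\<bar>" using n by (simp add: abs_mult[symmetric] field_simps)
  finally show False using lt n by auto
qed

theorem proposition2:
  fixes \<alpha> :: real and X :: "(real^2) set"
  assumes "\<alpha> > 0" and "finite X"
    and "\<forall>x\<in>X. \<not> alpha_isolated \<alpha> X x"
  shows "alpha_shape_vertices \<alpha> X = alpha_hull_vertices \<alpha> X"
proof
  show "alpha_shape_vertices \<alpha> X \<subseteq> alpha_hull_vertices \<alpha> X"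
  proof
    fix x assume "x \<in> alpha_shape_vertices \<alpha> X"
    then obtain x' c where "x \<in> X" "dist c x = \<alpha>" "ball c \<alpha> \<inter> X = {}"
      by (auto simp: alpha_shape_vertices_def alpha_edge_def)
    then show "x \<in> alpha_hull_vertices \<alpha> X"
      using lemA[OF assms(1)] by (auto simp: alpha_hull_vertices_def)
  qed
next
  show "alpha_hull_vertices \<alpha> X \<subseteq> alpha_shape_vertices \<alpha> X"
  proof
    fix x assume x: "x \<in> alpha_hull_vertices \<alpha> X"
    then have xX: "x \<in> X" and xf: "x \<in> frontier (alpha_convex_hull \<alpha> X)"
      by (auto simp: alpha_hull_vertices_def)
    obtain c0 where c0: "dist x c0 = \<alpha>" "\<forall>y\<in>X. \<alpha> \<le> dist c0 y"
      using lemB[OF assms(1) xX xf] by blast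
    obtain y0 where y0: "y0 \<in> X" "y0 \<noteq> x" "dist x y0 \<le> 2 * \<alpha>"
      using assms(3) xX by (force simp: alpha_isolated_def)
    show "x \<in> alpha_shape_vertices \<alpha> X"
      using lemC[OF assms(1,2) xX y0 c0] xX by (auto simp: alpha_shape_vertices_def)
  qed
qed

end
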